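(* For every rectangular permutation $\pi$ in the domain of the respective operator, $\psi_1(\pi)$, $\psi_2(\pi)$ and $\psi_u(\pi)$ have the same number of recoils as $\pi$, and $\psi_d(\pi)$ has exactly one more recoil than $\pi$.
   Context: A recoil of $\pi\in S_n$ is a value $i\in\{1,\dots,n-1\}$ with $\pi^{-1}_i>\pi^{-1}_{i+1}$ ($i+1$ occurs before $i$). A permutation is rectangular if it avoids $2413,2431,4213,4231$. For $\pi\in S_n$ (one-line form) and $1\le i,j\le n+1$, $\rho_{i,j}(\pi)\in S_{n+1}$ is obtained by increasing by $1$ every entry $\ge i$ and inserting the value $i$ at position $j$. Operators: $\psi_1=\rho_{1,1}$, domain all rectangular permutations (including the empty one); $\psi_2=\rho_{1,2}$, domain rectangular $\pi$ of size $\ge1$ with $\pi_1\ne1$; $\psi_u(\pi)=\rho_{\pi_1,1}(\pi)$, same domain as $\psi_2$; $\psi_d(\pi)=\rho_{\pi_1+1,1}(\pi)$, domain rectangular $\pi$ of size $\ge1$. *)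

theory Defs
  imports Main
begin

text \<open>Permutations of size n are represented in one-line form as lists of length n
  whose entries are exactly 1, ..., n; positions are 0-indexed in the list.\<close>

definition is_perm :: "nat list \<Rightarrow> bool" where
  "is_perm xs \<longleftrightarrow> distinct xs \<and> set xs = {1..length xs}"

definition contains :: "nat list \<Rightarrow> nat list \<Rightarrow> bool" where
  "contains xs p \<longleftrightarrow> (\<exists>is :: nat list. length is = length p \<and> sorted_wrt (<) is \<and>
     (\<forall>k<length is. is ! k < length xs) \<and>
     (\<forall>a<length p. \<forall>b<length p. (xs ! (is ! a) < xs ! (is ! b) \<longleftrightarrow> p ! a < p ! b)))"

definition rectangular :: "nat list \<Rightarrow> bool" where
  "rectangular xs \<longleftrightarrow> is_perm xs \<and>
     \<not> contains xs [2,4,1,3] \<and> \<not> contains xs [2,4,3,1] \<and>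
     \<not> contains xs [4,2,1,3] \<and> \<not> contains xs [4,2,3,1]"

definition is_recoil :: "nat list \<Rightarrow> nat \<Rightarrow> bool" where
  "is_recoil xs i \<longleftrightarrow> 1 \<le> i \<and> i < length xs \<and>
     (\<exists>j k. j < k \<and> k < length xs \<and> xs ! j = i + 1 \<and> xs ! k = i)"

definition recoils :: "nat list \<Rightarrow> nat" where
  "recoils xs = card {i. is_recoil xs i}"

text \<open>rho i j: increase every entry >= i by one, and insert value i at (1-indexed) position j.\<close>
definition rho :: "nat \<Rightarrow> nat \<Rightarrow> nat list \<Rightarrow> nat list" where
  "rho i j xs = (let ys = map (\<lambda>x. if x \<ge> i then x + 1 else x) xs
                 in take (j - 1) ys @ [i] @ drop (j - 1) ys)"

definition psi1 :: "nat list \<Rightarrow> nat list" where "psi1 xs = rho 1 1 xs"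
definition psi2 :: "nat list \<Rightarrow> nat list" where "psi2 xs = rho 1 2 xs"
definition psiu :: "nat list \<Rightarrow> nat list" where "psiu xs = rho (hd xs) 1 xs"
definition psid :: "nat list \<Rightarrow> nat list" where "psid xs = rho (hd xs + 1) 1 xs"

end

theory Submission
  imports Defs
begin

fun bef :: "nat list \<Rightarrow> nat \<Rightarrow> nat \<Rightarrow> bool" where
  "bef [] a b = False"
| "bef (x # xs) a b = ((x = a \<and> b \<in> set xs) \<or> bef xs a b)"

lemma bef_iff: "(\<exists>j k. j < k \<and> k < length xs \<and> xs ! j = a \<and> xs ! k = b) \<longleftrightarrow> bef xs a b"
proof (induction xs)
  case Nil
  then show ?case by simp
next
  case (Cons x xs)
  show ?case
  proof
    assume "\<exists>j k. j < k \<and> k < length (x # xs) \<and> (x # xs) ! j = a \<and> (x # xs) ! k = b"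
    then obtain j k where h: "j < k" "k < length (x # xs)" "(x # xs) ! j = a" "(x # xs) ! k = b" by blast
    then obtain k' where k': "k = Suc k'" by (cases k) auto
    show "bef (x # xs) a b"
    proof (cases j)
      case 0
      then show ?thesis using h k' by auto
    next
      case (Suc j')
      then have "bef xs a b" using Cons.IH h k' by auto
      then show ?thesis by simp
    qed
  next
    assume "bef (x # xs) a b"
    then consider "x = a" "b \<in> set xs" | "bef xs a b" by auto
    then show "\<exists>j k. j < k \<and> k < length (x # xs) \<and> (x # xs) ! j = a \<and> (x # xs) ! k = b"
    proof cases
      case 1
      then obtain k where "k < length xs" "xs ! k = b" by (auto simp: in_set_conv_nth)
      then show ?thesis using 1 by (intro exI[of _ 0] exI[of _ "Suc k"]) auto
    next
      case 2
      then obtain j k where "j < k" "k < length xs" "xs ! j = a" "xs ! k = b" using Cons.IH by blast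
      then show ?thesis by (intro exI[of _ "Suc j"] exI[of _ "Suc k"]) auto
    qed
  qed
qed

lemma recoil_bef: "is_recoil xs i \<longleftrightarrow> 1 \<le> i \<and> i < length xs \<and> bef xs (i+1) i"
  unfolding is_recoil_def using bef_iff[of xs "i+1" i] by blast

lemma bef_set: "bef xs a b \<Longrightarrow> a \<in> set xs \<and> b \<in> set xs"
  by (induction xs) auto

lemma bef_map: "inj f \<Longrightarrow> bef (map f xs) (f a) (f b) = bef xs a b"
  by (induction xs) (auto simp: inj_eq)

definition sh :: "nat \<Rightarrow> nat \<Rightarrow> nat" where "sh v = (\<lambda>x. if x \<ge> v then x + 1 else x)"

lemma inj_sh: "inj (sh v)"
  unfolding inj_def sh_def by auto

lemma rho1: "rho v 1 xs = v # map (sh v) xs"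
  by (simp add: rho_def sh_def Let_def)

lemma rho1': "rho v (Suc 0) xs = v # map (sh v) xs"
  by (simp add: rho_def sh_def Let_def)

lemma key:
  assumes p: "is_perm xs" and v: "1 \<le> v" "v \<le> length xs + 1"
  shows "is_recoil (v # map (sh v) xs) j \<longleftrightarrow>
    (if j + 1 = v then 2 \<le> v else if j = v then False else if j + 1 < v then is_recoil xs j
     else is_recoil xs (j - 1))"
proof -
  let ?n = "length xs"
  let ?s = "v # map (sh v) xs"
  have setxs: "set xs = {1..?n}" using p by (simp add: is_perm_def)
  have R: "is_recoil ?s j \<longleftrightarrow> 1 \<le> j \<and> j < ?n + 1 \<and>
      ((v = j + 1 \<and> j \<in> sh v ` set xs) \<or> bef (map (sh v) xs) (j+1) j)"
    by (simp add: recoil_bef)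
  show ?thesis
  proof (cases "j + 1 = v")
    case True
    have nb: "\<not> bef (map (sh v) xs) (j+1) j"
    proof
      assume "bef (map (sh v) xs) (j+1) j"
      then have "j + 1 \<in> set (map (sh v) xs)" using bef_set by blast
      then have "j + 1 \<in> sh v ` set xs" by simp
      then show False using True by (auto simp: sh_def split: if_splits)
    qed
    have "(1 \<le> j \<and> j < ?n + 1 \<and> j \<in> sh v ` set xs) \<longleftrightarrow> 2 \<le> v"
    proof
      assume "2 \<le> v"
      then have "j \<in> set xs" "sh v j = j" using True v setxs by (auto simp: sh_def)
      then show "1 \<le> j \<and> j < ?n + 1 \<and> j \<in> sh v ` set xs" using True v \<open>2 \<le> v\<close>
        by (metis Suc_1 Suc_eq_plus1 Suc_le_mono image_eqI less_Suc_eq_le)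
    qed (use True in auto)
    then show ?thesis using R True nb by auto
  next
    case False
    note F1 = False
    show ?thesis
    proof (cases "j = v")
      case True
      have "\<not> bef (map (sh v) xs) (j+1) j"
      proof
        assume "bef (map (sh v) xs) (j+1) j"
        then have "j \<in> set (map (sh v) xs)" using bef_set by blast
        then have "j \<in> sh v ` set xs" by simp
        then show False using True by (auto simp: sh_def split: if_splits)
      qed
      then show ?thesis using R True by auto
    next
      case False
      show ?thesis
      proof (cases "j + 1 < v")
        case True
        have "bef (map (sh v) xs) (j+1) j = bef (map (sh v) xs) (sh v (j+1)) (sh v j)"
          using True by (simp add: sh_def)
        also have "\<dots> = bef xs (j+1) j" by (rule bef_map[OF inj_sh])
        finally show ?thesis using R True F1 False v by (auto simp: recoil_bef)
      next
        case False2: False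
        then have jv: "j > v" using F1 False by auto
        have e: "sh v j = j + 1" "sh v (j - 1) = j" using jv by (auto simp: sh_def)
        have "bef (map (sh v) xs) (j+1) j = bef (map (sh v) xs) (sh v j) (sh v (j - 1))"
          by (simp only: e)
        also have "\<dots> = bef xs j (j-1)" by (rule bef_map[OF inj_sh])
        finally show ?thesis using R F1 False False2 jv v
          by (auto simp: recoil_bef)
      qed
    qed
  qed
qed

lemma recoil_fin: "finite {i. is_recoil xs i}"
  by (rule finite_subset[of _ "{..<length xs}"]) (auto simp: is_recoil_def)

lemma perm_len: "is_perm xs \<Longrightarrow> x \<in> set xs \<Longrightarrow> 1 \<le> x \<and> x \<le> length xs"
  by (auto simp: is_perm_def)

lemma hd_recoil:
  assumes p: "is_perm xs" and ne: "xs \<noteq> []"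
  shows "is_recoil xs (hd xs - 1) \<longleftrightarrow> 2 \<le> hd xs" and "\<not> is_recoil xs (hd xs)"
proof -
  obtain a rest where xs: "xs = a # rest" using ne by (cases xs) auto
  have d: "distinct xs" and s: "set xs = {1..length xs}" using p by (auto simp: is_perm_def)
  have a: "1 \<le> a" "a \<le> length xs" using s xs by auto
  show "is_recoil xs (hd xs - 1) \<longleftrightarrow> 2 \<le> hd xs"
  proof
    assume "2 \<le> hd xs"
    then have "a - 1 \<in> set xs" "a - 1 \<noteq> a" using s a xs by auto
    then have "a - 1 \<in> set rest" using xs by auto
    then show "is_recoil xs (hd xs - 1)" using xs a \<open>2 \<le> hd xs\<close> by (auto simp: recoil_bef)
  qed (auto simp: recoil_bef)
  show "\<not> is_recoil xs (hd xs)"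
  proof
    assume "is_recoil xs (hd xs)"
    then have "bef rest (a+1) a" using xs d by (auto simp: recoil_bef)
    then have "a \<in> set rest" using bef_set by auto
    then show False using d xs by auto
  qed
qed

lemma psiu_ok:
  assumes p: "is_perm xs" and ne: "xs \<noteq> []"
  shows "recoils (psiu xs) = recoils xs"
proof -
  let ?a = "hd xs"
  have a: "1 \<le> ?a" "?a \<le> length xs" using perm_len[OF p, of ?a] ne by auto
  have eq: "{j. is_recoil (psiu xs) j} = sh ?a ` {i. is_recoil xs i}"
  proof (intro set_eqI iffI)
    fix j assume "j \<in> {j. is_recoil (psiu xs) j}"
    then have r: "is_recoil (?a # map (sh ?a) xs) j" by (simp add: psiu_def rho1 rho1')
    note k = key[OF p a(1), of j] a
    show "j \<in> sh ?a ` {i. is_recoil xs i}"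
    proof (cases "j < ?a")
      case True
      then have "is_recoil xs j" using r k hd_recoil(1)[OF p ne]
      proof (cases "Suc j = ?a")
        case True
        then have "j = ?a - 1" by simp
        then show ?thesis using r k hd_recoil(1)[OF p ne] True by (auto split: if_splits)
      qed (use r k in \<open>auto split: if_splits\<close>)
      then show ?thesis using True by (intro image_eqI[of _ _ j]) (auto simp: sh_def)
    next
      case False
      then have "j > ?a" "is_recoil xs (j - 1)" using r k by (auto split: if_splits)
      then show ?thesis by (intro image_eqI[of _ _ "j - 1"]) (auto simp: sh_def)
    qed
  next
    fix j assume "j \<in> sh ?a ` {i. is_recoil xs i}"
    then obtain i where i: "is_recoil xs i" "j = sh ?a i" by auto
    note k = key[OF p a(1), of j] a
    have "is_recoil (?a # map (sh ?a) xs) j"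
    proof (cases "i < ?a")
      case True
      have "i \<ge> 1" using i by (simp add: is_recoil_def)
      then show ?thesis using i k hd_recoil(1)[OF p ne] True
        by (auto simp: sh_def split: if_splits)
    next
      case False
      then show ?thesis using i k by (auto simp: sh_def split: if_splits)
    qed
    then show "j \<in> {j. is_recoil (psiu xs) j}" by (simp add: psiu_def rho1 rho1')
  qed
  show ?thesis unfolding recoils_def eq
    by (rule card_image) (meson inj_sh inj_on_subset subset_UNIV)
qed

lemma psid_ok:
  assumes p: "is_perm xs" and ne: "xs \<noteq> []"
  shows "recoils (psid xs) = recoils xs + 1"
proof -
  let ?a = "hd xs"
  have a: "1 \<le> ?a" "?a \<le> length xs" using perm_len[OF p, of ?a] ne by auto
  have a1: "1 \<le> ?a + 1" "?a + 1 \<le> length xs + 1" using a by auto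
  note hr = hd_recoil(2)[OF p ne]
  have eq: "{j. is_recoil (psid xs) j} = insert ?a (sh (?a+1) ` {i. is_recoil xs i})"
  proof (intro set_eqI iffI)
    fix j assume "j \<in> {j. is_recoil (psid xs) j}"
    then have r: "is_recoil ((?a+1) # map (sh (?a+1)) xs) j" by (simp add: psid_def rho1 rho1')
    note k = key[OF p a1, of j]
    show "j \<in> insert ?a (sh (?a+1) ` {i. is_recoil xs i})"
    proof (cases "j < ?a")
      case True
      then have "is_recoil xs j" using r k by (auto split: if_splits)
      then show ?thesis using True by (intro insertI2 image_eqI[of _ _ j]) (auto simp: sh_def)
    next
      case False
      show ?thesis
      proof (cases "j = ?a")
        case False2: False
        then have "j > ?a + 1" "is_recoil xs (j - 1)" using r k False by (auto split: if_splits)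
        then show ?thesis by (intro insertI2 image_eqI[of _ _ "j - 1"]) (auto simp: sh_def)
      qed simp
    qed
  next
    fix j assume "j \<in> insert ?a (sh (?a+1) ` {i. is_recoil xs i})"
    then consider "j = ?a" | i where "is_recoil xs i" "j = sh (?a+1) i" by auto
    then have "is_recoil ((?a+1) # map (sh (?a+1)) xs) j"
    proof cases
      case 1
      then show ?thesis using key[OF p a1, of j] a by auto
    next
      case (2 i)
      note k = key[OF p a1, of j]
      have "i \<noteq> ?a" using 2 hr by auto
      then show ?thesis using 2 k by (auto simp: sh_def split: if_splits)
    qed
    then show "j \<in> {j. is_recoil (psid xs) j}" by (simp add: psid_def rho1 rho1')
  qed
  have nin: "?a \<notin> sh (?a+1) ` {i. is_recoil xs i}"
    using hr by (auto simp: sh_def split: if_splits)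
  have "card (sh (?a+1) ` {i. is_recoil xs i}) = card {i. is_recoil xs i}"
    by (rule card_image) (meson inj_sh inj_on_subset subset_UNIV)
  then show ?thesis unfolding recoils_def eq
    using nin recoil_fin[of xs] by simp
qed

lemma psi1_ok:
  assumes p: "is_perm xs"
  shows "recoils (psi1 xs) = recoils xs"
proof -
  have eq: "{j. is_recoil (psi1 xs) j} = Suc ` {i. is_recoil xs i}"
  proof (intro set_eqI iffI)
    fix j assume "j \<in> {j. is_recoil (psi1 xs) j}"
    then have r: "is_recoil (1 # map (sh 1) xs) j" by (simp add: psi1_def rho1 rho1')
    then have "j > 1" "is_recoil xs (j - 1)" using key[OF p, of 1 j] by (auto split: if_splits)
    then show "j \<in> Suc ` {i. is_recoil xs i}" by (intro image_eqI[of _ _ "j - 1"]) auto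
  next
    fix j assume "j \<in> Suc ` {i. is_recoil xs i}"
    then obtain i where i: "is_recoil xs i" "j = Suc i" by auto
    then have "i \<ge> 1" by (simp add: is_recoil_def)
    then have "is_recoil (1 # map (sh 1) xs) j" using i key[OF p, of 1 j] by auto
    then show "j \<in> {j. is_recoil (psi1 xs) j}" by (simp add: psi1_def rho1 rho1')
  qed
  show ?thesis unfolding recoils_def eq by (rule card_image) simp
qed

lemma psi2_ok:
  assumes p: "is_perm xs" and ne: "xs \<noteq> []" and h: "hd xs \<noteq> 1"
  shows "recoils (psi2 xs) = recoils xs"
proof -
  obtain x rest where xs: "xs = x # rest" using ne by (cases xs) auto
  have x: "x \<ge> 1" using perm_len[OF p, of x] xs by auto
  have s2: "psi2 xs = (x+1) # 1 # map (sh 1) rest"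
    using x xs by (simp add: psi2_def rho_def sh_def Let_def)
  have d: "distinct xs" and s: "set xs = {1..length xs}" using p by (auto simp: is_perm_def)
  have x2: "x \<noteq> 1" using h xs by simp
  have rge: "\<forall>y\<in>set rest. y \<ge> 1" using s xs by auto
  have shge: "\<forall>y \<in> set (map (sh 1) rest). y \<ge> 2" using rge by (auto simp: sh_def)
  have R: "is_recoil (psi2 xs) j \<longleftrightarrow> 2 \<le> j \<and> is_recoil xs (j - 1)" for j
  proof (cases "j \<le> 1")
    case True
    have "\<not> bef (map (sh 1) rest) c 1" for c
    proof
      assume "bef (map (sh 1) rest) c 1"
      then have "1 \<in> set (map (sh 1) rest)" using bef_set by blast
      then show False using shge by fastforce
    qed
    then show ?thesis using True x2 s2 by (auto simp: recoil_bef)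
  next
    case False
    have "bef (psi2 xs) (j+1) j = bef ((x+1) # map (sh 1) rest) (j+1) j"
      using False s2 by simp
    also have "\<dots> = bef (map (sh 1) xs) (sh 1 j) (sh 1 (j-1))"
    proof -
      have e: "sh 1 j = j + 1" "sh 1 (j - 1) = j" "sh 1 x = x + 1" using False x by (auto simp: sh_def)
      show ?thesis using xs by (simp only: e list.map)
    qed
    also have "\<dots> = bef xs j (j - 1)" by (rule bef_map[OF inj_sh])
    finally show ?thesis using False s2 xs by (auto simp: recoil_bef)
  qed
  have eq: "{j. is_recoil (psi2 xs) j} = Suc ` {i. is_recoil xs i}"
  proof (intro set_eqI iffI)
    fix j assume "j \<in> {j. is_recoil (psi2 xs) j}"
    then show "j \<in> Suc ` {i. is_recoil xs i}" using R[of j]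
      by (intro image_eqI[of _ _ "j - 1"]) auto
  next
    fix j assume "j \<in> Suc ` {i. is_recoil xs i}"
    then obtain i where i: "is_recoil xs i" "j = Suc i" by auto
    then have "i \<ge> 1" by (simp add: is_recoil_def)
    then show "j \<in> {j. is_recoil (psi2 xs) j}" using R[of j] i by auto
  qed
  show ?thesis unfolding recoils_def eq by (rule card_image) simp
qed

theorem lemma4p4:
  fixes xs :: "nat list"
  assumes "rectangular xs"
  shows "recoils (psi1 xs) = recoils xs
    \<and> (xs \<noteq> [] \<and> hd xs \<noteq> 1 \<longrightarrow> recoils (psi2 xs) = recoils xs)
    \<and> (xs \<noteq> [] \<and> hd xs \<noteq> 1 \<longrightarrow> recoils (psiu xs) = recoils xs)
    \<and> (xs \<noteq> [] \<longrightarrow> recoils (psid xs) = recoils xs + 1)"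
proof -
  have p: "is_perm xs" using assms by (simp add: rectangular_def)
  show ?thesis using psi1_ok[OF p] psi2_ok[OF p] psiu_ok[OF p] psid_ok[OF p] by blast
qed

end
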